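(* Let $P=[p_{f,k}]$, $f\in[0,F)$, $k\in[0,K)$, be a $(K,F,S)$ MRA. Consider the MADC model with $F$ batches of files $B_0,\dots,B_{F-1}$, $F$ mapper nodes indexed by $[0,F)$, and $K$ reducer nodes indexed by $[0,K)$, in which mapper node $f$ stores exactly the batch $B_f$ (so $M_f=\{B_f\}$) and reducer node $k$ is connected exactly to the mapper nodes in $\{f\in[0,F):\ p_{f,k}=*\}$. Then this model has computation load $r=1$, and the communication load $$L(1)=\frac{S}{KF}+\sum_{g=2}^{K}\frac{S_g}{KF(g-1)}$$ is achievable, where $S_g$ denotes the number of integers in $[0,S)$ that appear exactly $g$ times in $P$.
   Context: Notation: $[0,n)=\{0,1,\dots,n-1\}$, $[n]=\{1,\dots,n\}$. MADC (multi-access distributed computing) model: There are $\Lambda$ mapper nodes indexed by $[0,\Lambda)$ and $K$ reducer nodes indexed by $[0,K)$. There are $N$ input files $w_0,\dots,w_{N-1}\in\mathbb{F}_{2^d}$ and $Q$ output functions $\phi_q:\mathbb{F}_{2^d}^N\to\mathbb{F}_{2^b}$, $q\in[0,Q)$, of the form $\phi_q(w_0,\dots,w_{N-1})=h_q(v_{q,0},\dots,v_{q,N-1})$, where $v_{q,n}=g_{q,n}(w_n)\in\mathbb{F}_{2^t}$ is called an intermediate value (IV). Each reducer node $k$ is assigned a set $\mathcal W_k\subseteq[0,Q)$ of $Q/K$ output functions, these sets being pairwise disjoint. The files are partitioned into $F$ disjoint batches of $N/F$ files each. Map phase: each mapper node $\lambda$ stores a set $M_\lambda$ of batches and computes all IVs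 $v_{q,n}$, $q\in[0,Q)$, for all files $w_n$ in its stored batches. Each reducer node is connected to a set of mapper nodes and has access to every batch stored at any mapper node it is connected to, together with all IVs computed from those batches. Shuffle phase: each reducer node $k$ broadcasts to all other reducer nodes, error-free, a message $\mathbf X_k$ of $l_k$ bits that is a function of the IVs it has access to. Reduce phase: each reducer node $k$ must recover all IVs $v_{q,n}$ with $q\in\mathcal W_k$, $n\in[0,N)$, from the received messages and the IVs it has access to. The computation load is $r=\sum_{\lambda=0}^{\Lambda-1}|M_\lambda|/F$ and the communication load is $L=\sum_{k=0}^{K-1}l_k/(QNt)$. A communication load $L$ is achievable for a given model (given batches, mapper storage and mapper–reducer connections) if there exists a shuffle/reduce scheme satisfying all decoding requirements that attains $L$ (for a suitable choice of the number of files per batch, the number of functions per reducer, and the IV length $t$). Map-Reduce Array (MRA): For positive integers $K,F,S$, an $F\times K$ array $P=[p_{f,k}]$, $f\in[0,F)$, $k\in[0,K)$, whose entries are either the symbol $*$ or integers from $[0,S)$, with every integer of $[0,S)$ occurring in $P$, is a $(K,F,S)$ MRA if: (C1) each integer occurs more than once in $P$; (C2) whenever two distinct entries satisfy $p_{f_1,k_1}=p_{f_2,k_2}=s$ with $s$ an integer, then $f_1\neq f_2$, $k_1\neq k_2$, and $p_{f_1,k_2}=p_{f_2,k_1}=*$. *)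

theory Defs
  imports Complex_Main
begin

text \<open>An F x K array; entry None encodes the symbol *, entry Some s encodes the integer s.\<close>

definition occ :: "nat \<Rightarrow> nat \<Rightarrow> (nat \<Rightarrow> nat \<Rightarrow> nat option) \<Rightarrow> nat \<Rightarrow> nat" where
  "occ K F P s = card {(f, k). f < F \<and> k < K \<and> P f k = Some s}"

definition is_MRA :: "nat \<Rightarrow> nat \<Rightarrow> nat \<Rightarrow> (nat \<Rightarrow> nat \<Rightarrow> nat option) \<Rightarrow> bool" where
  "is_MRA K F S P \<longleftrightarrow>
     0 < K \<and> 0 < F \<and> 0 < S \<and>
     (\<forall>f<F. \<forall>k<K. \<forall>s. P f k = Some s \<longrightarrow> s < S) \<and>
     (\<forall>s<S. \<exists>f<F. \<exists>k<K. P f k = Some s) \<and>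
     (\<forall>s<S. occ K F P s > 1) \<and>
     (\<forall>f1<F. \<forall>k1<K. \<forall>f2<F. \<forall>k2<K. \<forall>s.
        (f1, k1) \<noteq> (f2, k2) \<and> P f1 k1 = Some s \<and> P f2 k2 = Some s \<longrightarrow>
        f1 \<noteq> f2 \<and> k1 \<noteq> k2 \<and> P f1 k2 = None \<and> P f2 k1 = None)"

definition S_count :: "nat \<Rightarrow> nat \<Rightarrow> nat \<Rightarrow> (nat \<Rightarrow> nat \<Rightarrow> nat option) \<Rightarrow> nat \<Rightarrow> nat" where
  "S_count K F S P g = card {s. s < S \<and> occ K F P s = g}"

text \<open>A model: \<Lambda> mapper nodes, K reducer nodes, F batches; M \<lambda> is the set of batch indices
  stored at mapper \<lambda>; conn k is the set of mapper nodes reducer k is connected to.\<close>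

definition comp_load :: "nat \<Rightarrow> nat \<Rightarrow> (nat \<Rightarrow> nat set) \<Rightarrow> real" where
  "comp_load \<Lambda> F M = (\<Sum>j<\<Lambda>. real (card (M j))) / real F"

text \<open>Intermediate values: v q n i is bit i of v_{q,n} (an element of F_{2^t}, viewed as t bits);
  values outside q<Q, n<N, i<t are fixed to False.\<close>
definition iv_space :: "nat \<Rightarrow> nat \<Rightarrow> nat \<Rightarrow> (nat \<Rightarrow> nat \<Rightarrow> nat \<Rightarrow> bool) set" where
  "iv_space Q N t = {v. \<forall>q n i. v q n i \<longrightarrow> q < Q \<and> n < N \<and> i < t}"

text \<open>Parameters chosen by the scheme:
  \<eta> = N/F files per batch (file n lies in batch n div \<eta>), m = Q/K functions per reducer
  (reducer k is assigned W_k = {q. q div m = k}), and IV length t.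
  enc k v is the l_k-bit message of reducer k, depending only on the IVs it has access to;
  dec k recovers its assigned IVs from the other reducers' messages and its accessible IVs.\<close>
definition madc_achievable ::
  "nat \<Rightarrow> nat \<Rightarrow> nat \<Rightarrow> (nat \<Rightarrow> nat set) \<Rightarrow> (nat \<Rightarrow> nat set) \<Rightarrow> real \<Rightarrow> bool" where
  "madc_achievable \<Lambda> K F M conn L \<longleftrightarrow>
    (\<exists>(\<eta>::nat) (m::nat) (t::nat) (l::nat \<Rightarrow> nat)
       (enc::nat \<Rightarrow> (nat \<Rightarrow> nat \<Rightarrow> nat \<Rightarrow> bool) \<Rightarrow> bool list)
       (dec::nat \<Rightarrow> (nat \<Rightarrow> bool list) \<Rightarrow> (nat \<Rightarrow> nat \<Rightarrow> nat \<Rightarrow> bool) \<Rightarrow> nat \<Rightarrow> nat \<Rightarrow> nat \<Rightarrow> bool).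
      0 < \<eta> \<and> 0 < m \<and> 0 < t \<and>
      (let Q = K * m; N = F * \<eta>;
           A = (\<lambda>k. {n. n < N \<and> n div \<eta> \<in> (\<Union>j\<in>conn k \<inter> {..<\<Lambda>}. M j)});
           W = (\<lambda>k. {q. q < Q \<and> q div m = k})
       in
        (\<forall>k<K. \<forall>v\<in>iv_space Q N t. length (enc k v) = l k) \<and>
        (\<forall>k<K. \<forall>v\<in>iv_space Q N t. \<forall>v'\<in>iv_space Q N t.
            (\<forall>q n. n \<in> A k \<longrightarrow> v q n = v' q n) \<longrightarrow> enc k v = enc k v') \<and>
        (\<forall>k<K. \<forall>v\<in>iv_space Q N t. \<forall>q\<in>W k. \<forall>n<N. \<forall>i<t.
            dec k (\<lambda>j. if j < K \<and> j \<noteq> k then enc j v else [])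
                  (\<lambda>q' n'. if n' \<in> A k then v q' n' else (\<lambda>_. False)) q n i = v q n i) \<and>
        L = real (\<Sum>k<K. l k) / real (Q * N * t)))"

end

theory Submission
  imports Defs
begin
locale mra =
  fixes K F S :: nat and P :: "nat \<Rightarrow> nat \<Rightarrow> nat option"
  assumes mra: "is_MRA K F S P"
begin

lemma KFS: "0 < K" "0 < F" "0 < S" using mra unfolding is_MRA_def by auto
lemma rng: "f < F \<Longrightarrow> k < K \<Longrightarrow> P f k = Some s \<Longrightarrow> s < S" using mra unfolding is_MRA_def by blast
lemma occ_gt: "s < S \<Longrightarrow> occ K F P s > 1" using mra unfolding is_MRA_def by blast
lemma cond: "f1 < F \<Longrightarrow> k1 < K \<Longrightarrow> f2 < F \<Longrightarrow> k2 < K \<Longrightarrow> (f1, k1) \<noteq> (f2, k2) \<Longrightarrow>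
   P f1 k1 = Some s \<Longrightarrow> P f2 k2 = Some s \<Longrightarrow> f1 \<noteq> f2 \<and> k1 \<noteq> k2 \<and> P f1 k2 = None \<and> P f2 k1 = None"
  using mra unfolding is_MRA_def by blast

definition col :: "nat \<Rightarrow> nat set" where
  "col s = {k. k < K \<and> (\<exists>f<F. P f k = Some s)}"
definition rr :: "nat \<Rightarrow> nat \<Rightarrow> nat" where
  "rr s k = (THE f. f < F \<and> P f k = Some s)"

lemma col_fin: "finite (col s)" unfolding col_def by auto
lemma col_sub: "col s \<subseteq> {..<K}" unfolding col_def by auto

lemma rr_eq: assumes "f < F" "k < K" "P f k = Some s" shows "rr s k = f"
  unfolding rr_def
proof (rule the_equality)
  show "f < F \<and> P f k = Some s" using assms by auto
  fix f' assume "f' < F \<and> P f' k = Some s"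
  then show "f' = f" using cond[of f' k f k s] assms by auto
qed

lemma rr: assumes "k \<in> col s" shows "rr s k < F" "P (rr s k) k = Some s"
proof -
  obtain f where "f < F" "k < K" "P f k = Some s" using assms unfolding col_def by auto
  then show "rr s k < F" "P (rr s k) k = Some s" using rr_eq by auto
qed

lemma cross: assumes "k1 \<in> col s" "k2 \<in> col s" "k1 \<noteq> k2" shows "P (rr s k1) k2 = None"
  using cond[of "rr s k1" k1 "rr s k2" k2 s] rr[OF assms(1)] rr[OF assms(2)] assms col_sub by auto

lemma col_card: "card (col s) = occ K F P s"
proof -
  let ?C = "{(f, k). f < F \<and> k < K \<and> P f k = Some s}"
  have "col s = snd ` ?C" unfolding col_def by force
  moreover have "inj_on snd ?C"
    by (auto simp: inj_on_def dest: cond)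
  ultimately show ?thesis unfolding occ_def by (simp add: card_image)
qed

lemma col_card_bounds: "s < S \<Longrightarrow> 2 \<le> card (col s) \<and> card (col s) \<le> K"
  using occ_gt[of s] col_card[of s] card_mono[OF _ col_sub[of s]] by auto


definition pos :: "nat \<Rightarrow> nat \<Rightarrow> nat \<Rightarrow> nat" where
  "pos s k j = card {j'\<in>col s. j' < j \<and> j' \<noteq> k}"

lemma pos_bij: assumes "k \<in> col s"
  shows "bij_betw (pos s k) (col s - {k}) {..< card (col s) - 1}"
proof -
  let ?C = "col s - {k}"
  have fC: "finite ?C" using col_fin by auto
  have pe: "pos s k j = card {j'\<in>?C. j' < j}" for j
    unfolding pos_def by (rule arg_cong[where f=card]) auto
  have inj: "inj_on (pos s k) ?C"
  proof (rule linorder_inj_onI)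
    fix x y assume xy: "x < y" "x \<in> ?C" "y \<in> ?C"
    have "{j'\<in>?C. j' < x} \<subset> {j'\<in>?C. j' < y}" using xy by auto
    then have "card {j'\<in>?C. j' < x} < card {j'\<in>?C. j' < y}"
      by (rule psubset_card_mono[rotated]) (use fC in auto)
    then show "pos s k x \<noteq> pos s k y" unfolding pe by simp
  qed auto
  have cC: "card ?C = card (col s) - 1" using assms col_fin by simp
  have img: "pos s k ` ?C \<subseteq> {..< card (col s) - 1}"
  proof
    fix x assume "x \<in> pos s k ` ?C"
    then obtain j where j: "j \<in> ?C" "x = pos s k j" by auto
    have "{j'\<in>?C. j' < j} \<subseteq> ?C - {j}" by auto
    then have "card {j'\<in>?C. j' < j} \<le> card (?C - {j})" using fC by (intro card_mono) auto
    also have "\<dots> < card ?C" using j fC by (metis card_Diff1_less)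
    finally show "x \<in> {..< card (col s) - 1}" using j cC pe by simp
  qed
  have "card (pos s k ` ?C) = card {..< card (col s) - 1}" using card_image[OF inj] cC by simp
  then have "pos s k ` ?C = {..< card (col s) - 1}"
    using card_subset_eq[OF _ img] by simp
  then show ?thesis using inj unfolding bij_betw_def by simp
qed

definition T :: nat where "T = fact K"
definition dd :: "nat \<Rightarrow> nat" where "dd s = T div (card (col s) - 1)"

lemma dd: assumes "s < S" shows "(card (col s) - 1) * dd s = T" "0 < dd s"
proof -
  have b: "1 \<le> card (col s) - 1" "card (col s) - 1 \<le> K" using col_card_bounds[OF assms] by auto
  then have "(card (col s) - 1) dvd T" unfolding T_def by (intro dvd_fact) auto
  then show e: "(card (col s) - 1) * dd s = T" unfolding dd_def by simp
  have "T > 0" unfolding T_def by simp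
  then show "0 < dd s" using e by (cases "dd s") auto
qed


definition bx :: "nat \<Rightarrow> nat \<Rightarrow> (nat \<Rightarrow> nat \<Rightarrow> nat \<Rightarrow> bool) \<Rightarrow> nat \<Rightarrow> bool" where
  "bx j s v c = odd (card {k\<in>col s. k \<noteq> j \<and> v k (rr s k) (pos s k j * dd s + c)})"
definition seg :: "nat \<Rightarrow> nat \<Rightarrow> (nat \<Rightarrow> nat \<Rightarrow> nat \<Rightarrow> bool) \<Rightarrow> bool list" where
  "seg j s v = (if j \<in> col s then map (bx j s v) [0..<dd s] else [])"
definition enc :: "nat \<Rightarrow> (nat \<Rightarrow> nat \<Rightarrow> nat \<Rightarrow> bool) \<Rightarrow> bool list" where
  "enc j v = concat (map (\<lambda>s. seg j s v) [0..<S])"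
definition Acc :: "nat \<Rightarrow> nat set" where
  "Acc k = {n. n < F \<and> P n k = None}"

lemma concat_eq: "(\<forall>x\<in>set xs. length (f x) = length (g x)) \<Longrightarrow> concat (map f xs) = concat (map g xs)
   \<Longrightarrow> x \<in> set xs \<Longrightarrow> f x = g x"
  by (induction xs) auto

lemma seg_len: "length (seg j s v) = (if j \<in> col s then dd s else 0)"
  unfolding seg_def by simp

lemma enc_len: "length (enc j v) = (\<Sum>s<S. if j \<in> col s then dd s else 0)"
  unfolding enc_def length_concat map_map o_def seg_len
  by (simp add: interv_sum_list_conv_sum_set_nat lessThan_atLeast0)

lemma enc_dep: assumes "\<forall>q n. n \<in> Acc j \<longrightarrow> v q n = v' q n"
  shows "enc j v = enc j v'"
proof -
  have "seg j s v = seg j s v'" for s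
  proof (cases "j \<in> col s")
    case True
    have "bx j s v c = bx j s v' c" for c
    proof -
      have "{k\<in>col s. k \<noteq> j \<and> v k (rr s k) (pos s k j * dd s + c)} =
            {k\<in>col s. k \<noteq> j \<and> v' k (rr s k) (pos s k j * dd s + c)}"
        using assms cross[OF _ True] rr unfolding Acc_def by auto
      then show ?thesis unfolding bx_def by simp
    qed
    then show ?thesis unfolding seg_def by auto
  qed (simp add: seg_def)
  then show ?thesis unfolding enc_def by simp
qed

lemma determ:
  assumes iK: "i < K" and acc: "\<forall>q n. n \<in> Acc i \<longrightarrow> v q n = v' q n"
    and msg: "\<forall>j<K. j \<noteq> i \<longrightarrow> enc j v = enc j v'"
    and n: "n < F" and b: "b < T"
  shows "v i n b = v' i n b"
proof (cases "P n i")
  case None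
  then show ?thesis using acc n unfolding Acc_def by auto
next
  case (Some s)
  have sS: "s < S" using rng[OF n iK Some] .
  have icol: "i \<in> col s" unfolding col_def using iK n Some by auto
  have rri: "rr s i = n" using rr_eq[OF n iK Some] .
  define g where "g = card (col s)"
  define d where "d = dd s"
  have gd: "(g - 1) * d = T" "0 < d" using dd[OF sS] unfolding g_def d_def by auto
  define p where "p = b div d"
  define c where "c = b mod d"
  have bpc: "b = p * d + c" unfolding p_def c_def by simp
  have cd: "c < d" unfolding c_def using gd by simp
  have pg: "p < g - 1" unfolding p_def using b gd
    by (metis less_mult_imp_div_less mult.commute)
  obtain j where j: "j \<in> col s - {i}" "pos s i j = p"
    using pos_bij[OF icol] pg unfolding g_def bij_betw_def by (metis imageE lessThan_iff)
  have jK: "j < K" "j \<noteq> i" "j \<in> col s" using j col_sub by auto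
  have "enc j v = enc j v'" using msg jK by auto
  then have "seg j s v = seg j s v'" unfolding enc_def
    using concat_eq[of "[0..<S]" "\<lambda>s. seg j s v" "\<lambda>s. seg j s v'" s] sS by (simp add: seg_len)
  then have "bx j s v c = bx j s v' c" unfolding seg_def using jK cd d_def
    by (metis (no_types, lifting) diff_zero length_upt nth_map nth_upt plus_nat.add_0 length_map)
  moreover
  have split: "{k\<in>col s. k \<noteq> j \<and> w k (rr s k) (pos s k j * dd s + c)} =
      {k\<in>col s - {i}. k \<noteq> j \<and> w k (rr s k) (pos s k j * dd s + c)} \<union> (if w i n b then {i} else {})"
    for w using icol jK rri j bpc d_def by auto
  have cards: "card {k\<in>col s. k \<noteq> j \<and> w k (rr s k) (pos s k j * dd s + c)} =
      card {k\<in>col s - {i}. k \<noteq> j \<and> w k (rr s k) (pos s k j * dd s + c)} + (if w i n b then 1 else 0)"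
    for w unfolding split[of w] using col_fin[of s] by (auto simp: card_insert_if)
  have E0: "{k\<in>col s - {i}. k \<noteq> j \<and> v k (rr s k) (pos s k j * dd s + c)} =
            {k\<in>col s - {i}. k \<noteq> j \<and> v' k (rr s k) (pos s k j * dd s + c)}"
    using acc cross[OF _ icol] rr unfolding Acc_def by auto
  ultimately show ?thesis unfolding bx_def using cards[of v] cards[of v'] by (auto split: if_splits)
qed


lemma load:
  "real (\<Sum>k<K. \<Sum>s<S. if k \<in> col s then dd s else 0) / real (K * 1 * (F * 1) * T) =
   real S / real (K * F) + (\<Sum>g=2..K. real (S_count K F S P g) / (real (K * F) * real (g - 1)))"
proof -
  have Tp: "T > 0" unfolding T_def by simp
  have KF: "real K > 0" "real F > 0" using KFS by auto
  have "(\<Sum>k<K. \<Sum>s<S. if k \<in> col s then dd s else 0) = (\<Sum>s<S. \<Sum>k<K. if k \<in> col s then dd s else 0)"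
    by (rule sum.swap)
  also have "\<dots> = (\<Sum>s<S. card (col s) * dd s)"
  proof (rule sum.cong[OF refl])
    fix s
    have "(\<Sum>k<K. if k \<in> col s then dd s else 0) = (\<Sum>k\<in>{..<K} \<inter> col s. dd s)"
      by (subst sum.inter_restrict) auto
    also have "{..<K} \<inter> col s = col s" using col_sub by auto
    finally show "(\<Sum>k<K. if k \<in> col s then dd s else 0) = card (col s) * dd s" by simp
  qed
  finally have e1: "real (\<Sum>k<K. \<Sum>s<S. if k \<in> col s then dd s else 0) = (\<Sum>s<S. real (card (col s) * dd s))"
    by simp
  have e2: "real (card (col s) * dd s) / real (K * 1 * (F * 1) * T) =
        1 / real (K * F) + 1 / (real (K * F) * real (occ K F P s - 1))" if "s < S" for s
  proof -
    have b: "2 \<le> card (col s)" using col_card_bounds[OF that] by auto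
    have d: "real (card (col s) - 1) * real (dd s) = real T" using dd(1)[OF that]
      by (metis of_nat_mult)
    have g1: "real (card (col s) - 1) = real (card (col s)) - 1" using b by simp
    have "real (card (col s) - 1) > 0" using b by simp
    then show ?thesis using d KF Tp unfolding col_card[symmetric] g1
      by (simp add: field_simps)
  qed
  have e3: "(\<Sum>s<S. 1 / (real (K * F) * real (occ K F P s - 1))) =
            (\<Sum>g=2..K. real (S_count K F S P g) / (real (K * F) * real (g - 1)))"
  proof -
    have "(\<Sum>s<S. 1 / (real (K * F) * real (occ K F P s - 1))) =
      (\<Sum>g\<in>{2..K}. \<Sum>s\<in>{x\<in>{..<S}. occ K F P x = g}. 1 / (real (K * F) * real (occ K F P s - 1)))"
      by (rule sum.group[symmetric]) (use col_card_bounds col_card in auto)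
    also have "\<dots> = (\<Sum>g=2..K. real (S_count K F S P g) / (real (K * F) * real (g - 1)))"
    proof (rule sum.cong[OF refl])
      fix g
      have "{x\<in>{..<S}. occ K F P x = g} = {s. s < S \<and> occ K F P s = g}" by auto
      then show "(\<Sum>s\<in>{x\<in>{..<S}. occ K F P x = g}. 1 / (real (K * F) * real (occ K F P s - 1))) =
          real (S_count K F S P g) / (real (K * F) * real (g - 1))"
        unfolding S_count_def by simp
    qed
    finally show ?thesis .
  qed
  show ?thesis unfolding e1 sum_divide_distrib
    using sum.cong[OF refl e2, of "{..<S}"] e3 by (simp add: sum.distrib)
qed


lemma achievable:
  "madc_achievable F K F (\<lambda>f. {f}) (\<lambda>k. {f. f < F \<and> P f k = None})
     (real S / real (K * F) +
      (\<Sum>g=2..K. real (S_count K F S P g) / (real (K * F) * real (g - 1))))"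
proof -
  have Aeq: "{n. n < F * 1 \<and> n div 1 \<in> (\<Union>j\<in>{f. f < F \<and> P f k = None} \<inter> {..<F}. {j})} = Acc k" for k
    unfolding Acc_def by auto
  have Weq: "{q. q < K * 1 \<and> q div 1 = k} = (if k < K then {k} else {})" for k by auto
  define dec where "dec = (\<lambda>k ms ac q n i. \<exists>v\<in>iv_space (K*1) (F*1) T.
      (\<lambda>j. if j < K \<and> j \<noteq> k then enc j v else []) = ms \<and>
      (\<lambda>q' n'. if n' \<in> Acc k then v q' n' else (\<lambda>_. False)) = ac \<and> v q n i)"
  have dec_ok: "dec k (\<lambda>j. if j < K \<and> j \<noteq> k then enc j v else [])
        (\<lambda>q' n'. if n' \<in> Acc k then v q' n' else (\<lambda>_. False)) k n i = v k n i"
    if "k < K" "v \<in> iv_space (K*1) (F*1) T" "n < F" "i < T" for k v n i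
  proof
    assume "v k n i" then show "dec k (\<lambda>j. if j < K \<and> j \<noteq> k then enc j v else [])
        (\<lambda>q' n'. if n' \<in> Acc k then v q' n' else (\<lambda>_. False)) k n i"
      unfolding dec_def using that by blast
  next
    assume "dec k (\<lambda>j. if j < K \<and> j \<noteq> k then enc j v else [])
        (\<lambda>q' n'. if n' \<in> Acc k then v q' n' else (\<lambda>_. False)) k n i"
    then obtain v' where v': "(\<lambda>j. if j < K \<and> j \<noteq> k then enc j v' else []) = (\<lambda>j. if j < K \<and> j \<noteq> k then enc j v else [])"
      "(\<lambda>q' n'. if n' \<in> Acc k then v' q' n' else (\<lambda>_. False)) = (\<lambda>q' n'. if n' \<in> Acc k then v q' n' else (\<lambda>_. False))"
      "v' k n i" unfolding dec_def by blast
    have m: "\<forall>j<K. j \<noteq> k \<longrightarrow> enc j v' = enc j v"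
    proof (intro allI impI)
      fix j assume "j < K" "j \<noteq> k"
      then show "enc j v' = enc j v" using fun_cong[OF v'(1), of j] by simp
    qed
    have a: "\<forall>q n. n \<in> Acc k \<longrightarrow> v' q n = v q n"
    proof (intro allI impI)
      fix q n assume "n \<in> Acc k"
      then show "v' q n = v q n" using fun_cong[OF fun_cong[OF v'(2), of q], of n] by simp
    qed
    show "v k n i" using determ[OF that(1) a m that(3,4)] v'(3) by simp
  qed
  define l where "l = (\<lambda>k. \<Sum>s<S. if k \<in> col s then dd s else 0)"
  show ?thesis
    unfolding madc_achievable_def Let_def
    apply (rule exI[where x=1], rule exI[where x=1], rule exI[where x=T], rule exI[where x=l],
       rule exI[where x=enc], rule exI[where x=dec])
    unfolding Aeq Weq
    apply (intro conjI)
          apply simp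
         apply simp
        apply (simp add: T_def)
       apply (simp add: enc_len l_def)
      apply (blast intro: enc_dep)
     apply (use dec_ok in auto)[1]
    apply (use load in \<open>simp add: l_def\<close>)
    done
qed

end

theorem theorem2:
  fixes K F S :: nat and P :: "nat \<Rightarrow> nat \<Rightarrow> nat option"
  assumes "is_MRA K F S P"
  shows "comp_load F F (\<lambda>f. {f}) = 1 \<and>
         madc_achievable F K F (\<lambda>f. {f}) (\<lambda>k. {f. f < F \<and> P f k = None})
           (real S / real (K * F) +
            (\<Sum>g=2..K. real (S_count K F S P g) / (real (K * F) * real (g - 1))))"
proof
  interpret mra K F S P by standard (rule assms)
  show "comp_load F F (\<lambda>f. {f}) = 1" unfolding comp_load_def using KFS by simp
  show "madc_achievable F K F (\<lambda>f. {f}) (\<lambda>k. {f. f < F \<and> P f k = None})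
           (real S / real (K * F) +
            (\<Sum>g=2..K. real (S_count K F S P g) / (real (K * F) * real (g - 1))))"
    by (rule achievable)
qed

end
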